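(* Let $G=(V_G,E_G)$ be a finite graph whose automorphism group acts vertex-transitively on $V_G$. Then the worst case of the graph semi-definite program for $H$ equals $-\sqrt{W}$, where $W$ is the worst case of the graph semi-definite program for $H^2$; moreover $W=\vartheta(G)$, and both worst cases are attained at $\vec J=|V_G|^{-1/2}(1,1,\ldots,1)$.
   Context: Let $G=(V_G,E_G)$ be a finite graph; rows and columns of the matrices below are indexed by $V_G$. For a real vector $\vec J=(J_\alpha)_{\alpha\in V_G}$: - The "graph semi-definite program for $H^2$" is: maximize $\sum_{\alpha,\beta}M_{\alpha,\beta}J_\alpha J_\beta$ over real symmetric positive semi-definite matrices $M$ with $M_{\alpha,\alpha}=1$ for all $\alpha$ and $M_{\alpha,\beta}=0$ whenever $(\alpha,\beta)\in E_G$. - The "graph semi-definite program for $H$" is: minimize $(\vec J,v)=\sum_\alpha J_\alpha v_\alpha$ over real vectors $v$ and matrices $M$ satisfying the constraints above, such that the block matrix $N=\begin{pmatrix}1 & v^T\\ v & M\end{pmatrix}$ is positive semi-definite. - The worst case of the program for $H^2$ is the maximum of its optimum over all $\vec J$ with $\sum_\alpha J_\alpha^2=1$. The worst case of the program for $H$ is the minimum of its optimum over all $\vec J$ with $\sum_\alpha J_\alpha^2=1$. $\vartheta(G)$ denotes the Lovász theta function: the maximum of the sum of all entries of a real symmetric positive semi-definite matrix $B$ with $\mathrm{tr}\,B=1$ and $B_{\alpha,\beta}=0$ whenever $(\alpha,\beta)\in E_G$. *)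

theory Defs
  imports "HOL-Analysis.Analysis"
begin

definition simple_graph :: "('a \<Rightarrow> 'a \<Rightarrow> bool) \<Rightarrow> bool" where
  "simple_graph E \<longleftrightarrow> (\<forall>x y. E x y \<longrightarrow> E y x) \<and> (\<forall>x. \<not> E x x)"

definition graph_automorphism :: "('a \<Rightarrow> 'a \<Rightarrow> bool) \<Rightarrow> ('a \<Rightarrow> 'a) \<Rightarrow> bool" where
  "graph_automorphism E \<sigma> \<longleftrightarrow> bij \<sigma> \<and> (\<forall>x y. E x y \<longleftrightarrow> E (\<sigma> x) (\<sigma> y))"

definition vertex_transitive :: "('a \<Rightarrow> 'a \<Rightarrow> bool) \<Rightarrow> bool" where
  "vertex_transitive E \<longleftrightarrow> (\<forall>x y. \<exists>\<sigma>. graph_automorphism E \<sigma> \<and> \<sigma> x = y)"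

definition psd :: "('i::finite \<Rightarrow> 'i \<Rightarrow> real) \<Rightarrow> bool" where
  "psd M \<longleftrightarrow> (\<forall>i j. M i j = M j i) \<and>
     (\<forall>x :: 'i \<Rightarrow> real. 0 \<le> (\<Sum>i\<in>UNIV. \<Sum>j\<in>UNIV. x i * M i j * x j))"

definition sdp_feasible :: "('a::finite \<Rightarrow> 'a \<Rightarrow> bool) \<Rightarrow> ('a \<Rightarrow> 'a \<Rightarrow> real) \<Rightarrow> bool" where
  "sdp_feasible E M \<longleftrightarrow> psd M \<and> (\<forall>a. M a a = 1) \<and> (\<forall>a b. E a b \<longrightarrow> M a b = 0)"

text \<open>Block matrix N = [[1, v^T],[v, M]], indexed by 'a option (None = the extra first index).\<close>
definition block_matrix :: "('a \<Rightarrow> real) \<Rightarrow> ('a \<Rightarrow> 'a \<Rightarrow> real) \<Rightarrow> 'a option \<Rightarrow> 'a option \<Rightarrow> real" where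
  "block_matrix v M p q = (case (p, q) of
      (None, None) \<Rightarrow> 1
    | (None, Some b) \<Rightarrow> v b
    | (Some a, None) \<Rightarrow> v a
    | (Some a, Some b) \<Rightarrow> M a b)"

definition sdp_H2 :: "('a::finite \<Rightarrow> 'a \<Rightarrow> bool) \<Rightarrow> ('a \<Rightarrow> real) \<Rightarrow> real" where
  "sdp_H2 E J = Sup {(\<Sum>a\<in>UNIV. \<Sum>b\<in>UNIV. M a b * J a * J b) | M. sdp_feasible E M}"

definition sdp_H :: "('a::finite \<Rightarrow> 'a \<Rightarrow> bool) \<Rightarrow> ('a \<Rightarrow> real) \<Rightarrow> real" where
  "sdp_H E J = Inf {(\<Sum>a\<in>UNIV. J a * v a) | v M. sdp_feasible E M \<and> psd (block_matrix v M)}"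

definition unit_vecs :: "('a::finite \<Rightarrow> real) set" where
  "unit_vecs = {J. (\<Sum>a\<in>UNIV. (J a)\<^sup>2) = 1}"

definition worst_H2 :: "('a::finite \<Rightarrow> 'a \<Rightarrow> bool) \<Rightarrow> real" where
  "worst_H2 E = Sup (sdp_H2 E ` unit_vecs)"

definition worst_H :: "('a::finite \<Rightarrow> 'a \<Rightarrow> bool) \<Rightarrow> real" where
  "worst_H E = Inf (sdp_H E ` unit_vecs)"

definition lovasz_theta :: "('a::finite \<Rightarrow> 'a \<Rightarrow> bool) \<Rightarrow> real" where
  "lovasz_theta E = Sup {(\<Sum>a\<in>UNIV. \<Sum>b\<in>UNIV. B a b) | B.
      psd B \<and> (\<Sum>a\<in>UNIV. B a a) = 1 \<and> (\<forall>a b. E a b \<longrightarrow> B a b = 0)}"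

end

theory Submission
  imports Defs
begin

definition qf :: "('i::finite \<Rightarrow> 'i \<Rightarrow> real) \<Rightarrow> ('i \<Rightarrow> real) \<Rightarrow> ('i \<Rightarrow> real) \<Rightarrow> real" where
  "qf M x y = (\<Sum>i\<in>UNIV. \<Sum>j\<in>UNIV. x i * M i j * y j)"

lemma qf_add_left: "qf M (\<lambda>i. x i + c * y i) z = qf M x z + c * qf M y z"
  unfolding qf_def by (simp add: algebra_simps sum.distrib sum_distrib_left)

lemma qf_add_right: "qf M z (\<lambda>i. x i + c * y i) = qf M z x + c * qf M z y"
  unfolding qf_def by (simp add: algebra_simps sum.distrib sum_distrib_left)

lemma qf_sym: assumes "\<forall>i j. M i j = M j i" shows "qf M x y = qf M y x"
  unfolding qf_def
  by (subst sum.swap) (simp add: assms mult.commute mult.left_commute)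

lemma psd_qf: "psd M \<Longrightarrow> 0 \<le> qf M x x"
  unfolding psd_def qf_def by blast

lemma psd_CS:
  assumes "psd M"
  shows "(qf M x u)^2 \<le> qf M x x * qf M u u"
proof (cases "qf M u u = 0")
  case True
  have sym: "\<forall>i j. M i j = M j i" using assms psd_def by blast
  have "qf M x u = 0"
  proof (rule ccontr)
    assume ne: "qf M x u \<noteq> 0"
    define l where "l = - (qf M x x + 1) / (2 * qf M x u)"
    have "0 \<le> qf M (\<lambda>i. x i + l * u i) (\<lambda>i. x i + l * u i)" by (rule psd_qf[OF assms])
    also have "\<dots> = qf M x x + 2 * l * qf M x u + l * l * qf M u u"
      by (simp add: qf_add_left qf_add_right qf_sym[OF sym, of u x] algebra_simps)
    also have "\<dots> = -1" using ne True by (simp add: l_def field_simps)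
    finally show False by simp
  qed
  then show ?thesis using True by simp
next
  case False
  have sym: "\<forall>i j. M i j = M j i" using assms psd_def by blast
  have t: "qf M u u > 0" using False psd_qf[OF assms, of u] by simp
  define l where "l = - qf M x u / qf M u u"
  have "0 \<le> qf M (\<lambda>i. x i + l * u i) (\<lambda>i. x i + l * u i)" by (rule psd_qf[OF assms])
  also have "\<dots> = qf M x x + 2 * l * qf M x u + l * l * qf M u u"
    by (simp add: qf_add_left qf_add_right qf_sym[OF sym, of u x] algebra_simps)
  also have "\<dots> = qf M x x - (qf M x u)^2 / qf M u u" using t
    by (simp add: l_def field_simps power2_eq_square)
  finally have "(qf M x u)^2 / qf M u u \<le> qf M x x" by simp
  then show ?thesis using t by (simp add: field_simps)
qed

lemma sum_option: "(\<Sum>p\<in>(UNIV::'a::finite option set). f p) = f None + (\<Sum>a\<in>UNIV. f (Some a))"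
  by (simp add: UNIV_option_conv sum.reindex)

lemma block_form:
  "(\<Sum>p\<in>UNIV. \<Sum>q\<in>UNIV. y p * block_matrix v M p q * y q)
   = (y None)^2 + 2 * y None * (\<Sum>a\<in>UNIV. y (Some a) * v a) + qf M (\<lambda>a. y (Some a)) (\<lambda>a. y (Some a))"
  by (simp add: sum_option block_matrix_def qf_def power2_eq_square algebra_simps sum.distrib
      sum_distrib_left sum_distrib_right)


lemma block_psd:
  assumes "psd M" and "\<And>x. (\<Sum>a\<in>UNIV. x a * v a)^2 \<le> qf M x x"
  shows "psd (block_matrix v M)"
  unfolding psd_def
proof (intro conjI allI)
  fix p q show "block_matrix v M p q = block_matrix v M q p"
    using assms(1) unfolding psd_def block_matrix_def by (auto split: option.splits)
next
  fix y :: "'a option \<Rightarrow> real"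
  define w where "w = (\<Sum>a\<in>UNIV. y (Some a) * v a)"
  have "w^2 \<le> qf M (\<lambda>a. y (Some a)) (\<lambda>a. y (Some a))" unfolding w_def by (rule assms(2))
  moreover have "0 \<le> (y None + w)^2" by simp
  ultimately have "0 \<le> (y None)^2 + 2 * y None * w + qf M (\<lambda>a. y (Some a)) (\<lambda>a. y (Some a))"
    by (simp add: power2_eq_square algebra_simps)
  then show "0 \<le> (\<Sum>p\<in>UNIV. \<Sum>q\<in>UNIV. y p * block_matrix v M p q * y q)"
    by (simp add: block_form w_def)
qed

lemma block_psd_D:
  assumes "psd (block_matrix v M)"
  shows "(\<Sum>a\<in>UNIV. x a * v a)^2 \<le> qf M x x"
proof -
  define w where "w = (\<Sum>a\<in>UNIV. x a * v a)"
  define y where "y = (\<lambda>p. case p of None \<Rightarrow> - w | Some a \<Rightarrow> x a)"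
  have "0 \<le> (\<Sum>p\<in>UNIV. \<Sum>q\<in>UNIV. y p * block_matrix v M p q * y q)"
    using assms unfolding psd_def by blast
  also have "\<dots> = w^2 - 2 * w * w + qf M x x"
    by (simp add: block_form y_def w_def)
  finally show ?thesis by (simp add: w_def power2_eq_square)
qed

lemma mult_delta_ri: "(x::real) * (if c then 1 else 0) = (if c then x else 0)" by simp

lemma qf_delta: "qf M (\<lambda>i. if i = a then 1 else 0) (\<lambda>i. if i = b then 1 else 0) = M a b"
proof -
  have "qf M (\<lambda>i. if i = a then 1 else 0) (\<lambda>i. if i = b then 1 else 0)
      = (\<Sum>i\<in>UNIV. if i = a then (\<Sum>j\<in>UNIV. if j = b then M i j else 0) else 0)"
    unfolding qf_def by (intro sum.cong refl) (simp add: mult_delta_ri)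
  also have "\<dots> = M a b" by simp
  finally show ?thesis .
qed

lemma feasible_bound:
  assumes "sdp_feasible E M" shows "\<bar>M a b\<bar> \<le> 1"
proof -
  have p: "psd M" and d: "\<And>a. M a a = 1" using assms sdp_feasible_def by auto
  have s: "M b a = M a b" using p psd_def by metis
  define ea where "ea = (\<lambda>i. if i = a then 1 else (0::real))"
  define eb where "eb = (\<lambda>i. if i = b then 1 else (0::real))"
  have q: "qf M ea ea = 1" "qf M eb eb = 1" "qf M ea eb = M a b" "qf M eb ea = M a b"
    unfolding ea_def eb_def qf_delta using d s by auto
  have "0 \<le> qf M (\<lambda>i. ea i + 1 * eb i) (\<lambda>i. ea i + 1 * eb i)"
    by (rule psd_qf[OF p])
  also have "\<dots> = 2 + 2 * M a b" unfolding qf_add_left qf_add_right q by simp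
  finally have 1: "-1 \<le> M a b" by simp
  have "0 \<le> qf M (\<lambda>i. ea i + (-1) * eb i) (\<lambda>i. ea i + (-1) * eb i)"
    by (rule psd_qf[OF p])
  also have "\<dots> = 2 - 2 * M a b" unfolding qf_add_left qf_add_right q by simp
  finally have 2: "M a b \<le> 1" by simp
  show ?thesis using 1 2 by simp
qed


lemma aut_comp: "graph_automorphism E s \<Longrightarrow> graph_automorphism E t \<Longrightarrow> graph_automorphism E (s \<circ> t)"
  unfolding graph_automorphism_def by (auto intro: bij_comp)

lemma aut_inv: assumes "graph_automorphism E s" shows "graph_automorphism E (inv s)"
proof -
  have b: "bij s" using assms graph_automorphism_def by blast
  have "E x y \<longleftrightarrow> E (inv s x) (inv s y)" for x y
    using assms unfolding graph_automorphism_def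
    by (metis b bij_inv_eq_iff)
  then show ?thesis unfolding graph_automorphism_def using b bij_imp_bij_inv by blast
qed

lemma aut_id: "graph_automorphism E id"
  unfolding graph_automorphism_def by auto

lemma sum_bij: "bij s \<Longrightarrow> (\<Sum>i\<in>UNIV. h (s i)) = (\<Sum>i\<in>UNIV. h i)"
  using sum.reindex_bij_betw[of s UNIV UNIV h] by simp

lemma aut_shift:
  assumes "graph_automorphism E t"
  shows "bij_betw (\<lambda>s. s \<circ> t) {s. graph_automorphism E s} {s. graph_automorphism E s}"
proof (rule bij_betw_byWitness[where f' = "\<lambda>s. s \<circ> inv t"])
  have b: "bij t" using assms graph_automorphism_def by blast
  have i1: "t \<circ> inv t = id" using b bij_is_surj surj_iff by metis
  have i2: "inv t \<circ> t = id" using b bij_is_inj inj_iff by metis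
  show "\<forall>a\<in>{s. graph_automorphism E s}. a \<circ> t \<circ> inv t = a"
    by (simp add: o_assoc[symmetric] i1)
  show "\<forall>a\<in>{s. graph_automorphism E s}. a \<circ> inv t \<circ> t = a"
    by (simp add: o_assoc[symmetric] i2)
  show "(\<lambda>s. s \<circ> t) ` {s. graph_automorphism E s} \<subseteq> {s. graph_automorphism E s}"
    using assms aut_comp by blast
  show "(\<lambda>s. s \<circ> inv t) ` {s. graph_automorphism E s} \<subseteq> {s. graph_automorphism E s}"
    using aut_inv[OF assms] aut_comp by blast
qed

lemma averaging:
  fixes E :: "'a::finite \<Rightarrow> 'a \<Rightarrow> bool" and B :: "'a \<Rightarrow> 'a \<Rightarrow> real"
  assumes vt: "vertex_transitive E" and pB: "psd B" and tr: "(\<Sum>a\<in>UNIV. B a a) = 1"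
    and zB: "\<forall>a b. E a b \<longrightarrow> B a b = 0"
  shows "\<exists>M. sdp_feasible E M \<and> (\<Sum>a\<in>UNIV. \<Sum>b\<in>UNIV. B a b) = (\<Sum>a\<in>UNIV. \<Sum>b\<in>UNIV. M a b) / real CARD('a)"
proof -
  define A where "A = {s. graph_automorphism E (s::'a \<Rightarrow> 'a)}"
  define g where "g = real (card A)"
  define n where "n = real CARD('a)"
  have finA: "finite A" by simp
  have "id \<in> A" using aut_id A_def by blast
  then have gpos: "g > 0" using finA g_def card_gt_0_iff by fastforce
  have npos: "n > 0" using n_def by simp
  have bijA: "\<And>s. s \<in> A \<Longrightarrow> bij s" using A_def graph_automorphism_def by blast
  define M where "M = (\<lambda>a b. n / g * (\<Sum>s\<in>A. B (s a) (s b)))"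
  have symB: "\<And>i j. B i j = B j i" using pB psd_def by blast
  have psdM: "psd M" unfolding psd_def
  proof (intro conjI allI)
    fix i j show "M i j = M j i" unfolding M_def using symB by simp
  next
    fix x :: "'a \<Rightarrow> real"
    have e: "(\<Sum>i\<in>UNIV. \<Sum>j\<in>UNIV. x i * M i j * x j)
        = n / g * (\<Sum>s\<in>A. (\<Sum>i\<in>UNIV. \<Sum>j\<in>UNIV. x i * B (s i) (s j) * x j))"
    proof -
      have p: "x i * M i j * x j = n / g * (\<Sum>s\<in>A. x i * B (s i) (s j) * x j)" for i j
        unfolding M_def by (simp add: sum_distrib_left sum_distrib_right mult_ac)
      have q: "(\<Sum>j\<in>UNIV. \<Sum>s\<in>A. x i * B (s i) (s j) * x j) = (\<Sum>s\<in>A. \<Sum>j\<in>UNIV. x i * B (s i) (s j) * x j)" for i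
        by (rule sum.swap)
      have "(\<Sum>i\<in>UNIV. \<Sum>j\<in>UNIV. x i * M i j * x j)
          = n / g * (\<Sum>i\<in>UNIV. \<Sum>j\<in>UNIV. \<Sum>s\<in>A. x i * B (s i) (s j) * x j)"
        by (simp only: p sum_distrib_left[symmetric])
      also have "\<dots> = n / g * (\<Sum>i\<in>UNIV. \<Sum>s\<in>A. \<Sum>j\<in>UNIV. x i * B (s i) (s j) * x j)"
        by (simp only: q)
      also have "\<dots> = n / g * (\<Sum>s\<in>A. \<Sum>i\<in>UNIV. \<Sum>j\<in>UNIV. x i * B (s i) (s j) * x j)"
        by (subst sum.swap) (rule refl)
      finally show ?thesis .
    qed
    have nn: "0 \<le> (\<Sum>i\<in>UNIV. \<Sum>j\<in>UNIV. x i * B (s i) (s j) * x j)" if "s \<in> A" for s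
    proof -
      have bs: "bij s" using bijA that .
      define y where "y = x \<circ> inv s"
      have xy: "x i = y (s i)" for i using bs by (simp add: y_def bij_is_inj)
      have "(\<Sum>i\<in>UNIV. \<Sum>j\<in>UNIV. x i * B (s i) (s j) * x j)
          = (\<Sum>i\<in>UNIV. \<Sum>j\<in>UNIV. y (s i) * B (s i) (s j) * y (s j))" by (simp add: xy)
      also have "\<dots> = (\<Sum>i\<in>UNIV. \<Sum>j\<in>UNIV. y i * B i (s j) * y (s j))"
        by (rule sum_bij[OF bs, where h = "\<lambda>i. \<Sum>j\<in>UNIV. y i * B i (s j) * y (s j)"])
      also have "\<dots> = (\<Sum>i\<in>UNIV. \<Sum>j\<in>UNIV. y i * B i j * y j)"
      proof (rule sum.cong[OF refl])
        fix i show "(\<Sum>j\<in>UNIV. y i * B i (s j) * y (s j)) = (\<Sum>j\<in>UNIV. y i * B i j * y j)"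
          by (rule sum_bij[OF bs, where h = "\<lambda>j. y i * B i j * y j"])
      qed
      also have "\<dots> \<ge> 0" using pB unfolding psd_def by blast
      finally show ?thesis by simp
    qed
    have "0 \<le> (\<Sum>s\<in>A. (\<Sum>i\<in>UNIV. \<Sum>j\<in>UNIV. x i * B (s i) (s j) * x j))"
      by (rule sum_nonneg) (rule nn)
    then show "0 \<le> (\<Sum>i\<in>UNIV. \<Sum>j\<in>UNIV. x i * M i j * x j)" unfolding e
      using gpos npos by simp
  qed
  define f where "f = (\<lambda>a. \<Sum>s\<in>A. B (s a) (s a))"
  have fshift: "f (t a) = f a" if "t \<in> A" for t a
  proof -
    have ta: "graph_automorphism E t" using that A_def by blast
    have "(\<Sum>s\<in>A. (\<lambda>r. B (r a) (r a)) ((\<lambda>s. s \<circ> t) s)) = (\<Sum>s\<in>A. (\<lambda>r. B (r a) (r a)) s)"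
      unfolding A_def by (rule sum.reindex_bij_betw[OF aut_shift[OF ta]])
    then show ?thesis unfolding f_def by simp
  qed
  obtain a0 :: 'a where True by blast
  have fconst: "f a = f a0" for a
  proof -
    obtain t where t1: "graph_automorphism E t" and t2: "t a0 = a"
      using vt unfolding vertex_transitive_def by blast
    have "t \<in> A" using t1 A_def by simp
    then have "f (t a0) = f a0" by (rule fshift)
    then show ?thesis by (simp only: t2)
  qed
  have "(\<Sum>a\<in>UNIV. f a) = (\<Sum>s\<in>A. \<Sum>a\<in>UNIV. B (s a) (s a))"
    unfolding f_def by (rule sum.swap)
  also have "\<dots> = (\<Sum>s\<in>A. 1)"
  proof (rule sum.cong[OF refl])
    fix s assume "s \<in> A"
    then have "(\<Sum>a\<in>UNIV. B (s a) (s a)) = (\<Sum>a\<in>UNIV. B a a)"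
      by (intro sum_bij[where h = "\<lambda>a. B a a"] bijA)
    then show "(\<Sum>a\<in>UNIV. B (s a) (s a)) = 1" using tr by simp
  qed
  also have "\<dots> = g" by (simp add: g_def)
  finally have s1: "(\<Sum>a\<in>UNIV. f a) = g" .
  have "(\<Sum>a\<in>UNIV. f a) = (\<Sum>a\<in>(UNIV::'a set). f a0)"
    by (rule sum.cong[OF refl]) (rule fconst)
  then have "n * f a0 = g" using s1 n_def by simp
  then have diag: "M a a = 1" for a
    unfolding M_def using fconst[of a] f_def gpos npos by (simp add: field_simps)
  have zero: "M a b = 0" if "E a b" for a b
  proof -
    have "B (s a) (s b) = 0" if "s \<in> A" for s
      using that A_def zB \<open>E a b\<close> graph_automorphism_def by blast
    then show ?thesis unfolding M_def by simp
  qed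
  have "(\<Sum>a\<in>UNIV. \<Sum>b\<in>UNIV. M a b) = n / g * (\<Sum>s\<in>A. \<Sum>a\<in>UNIV. \<Sum>b\<in>UNIV. B (s a) (s b))"
    unfolding M_def by (simp add: sum_distrib_left sum.swap[of _ A])
  also have "\<dots> = n / g * (\<Sum>s\<in>A. \<Sum>a\<in>UNIV. \<Sum>b\<in>UNIV. B a b)"
  proof -
    have "(\<Sum>a\<in>UNIV. \<Sum>b\<in>UNIV. B (s a) (s b)) = (\<Sum>a\<in>UNIV. \<Sum>b\<in>UNIV. B a b)" if "s \<in> A" for s
    proof -
      have bs: "bij s" using bijA that .
      have "(\<Sum>a\<in>UNIV. \<Sum>b\<in>UNIV. B (s a) (s b)) = (\<Sum>a\<in>UNIV. \<Sum>b\<in>UNIV. B a (s b))"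
        by (rule sum_bij[OF bs, where h = "\<lambda>a. \<Sum>b\<in>UNIV. B a (s b)"])
      also have "\<dots> = (\<Sum>a\<in>UNIV. \<Sum>b\<in>UNIV. B a b)"
      proof (rule sum.cong[OF refl])
        fix a show "(\<Sum>b\<in>UNIV. B a (s b)) = (\<Sum>b\<in>UNIV. B a b)"
          by (rule sum_bij[OF bs, where h = "\<lambda>b. B a b"])
      qed
      finally show ?thesis .
    qed
    then show ?thesis by simp
  qed
  also have "\<dots> = n * (\<Sum>a\<in>UNIV. \<Sum>b\<in>UNIV. B a b)" using gpos finA by (simp add: g_def card_gt_0_iff)
  finally have "(\<Sum>a\<in>UNIV. \<Sum>b\<in>UNIV. B a b) = (\<Sum>a\<in>UNIV. \<Sum>b\<in>UNIV. M a b) / n"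
    using npos by simp
  then show ?thesis using psdM diag zero unfolding sdp_feasible_def n_def by blast
qed


lemma id_feasible:
  assumes "simple_graph E"
  shows "sdp_feasible E (\<lambda>a b. if a = b then 1 else 0)"
  unfolding sdp_feasible_def psd_def
proof (intro conjI allI impI)
  fix x :: "'a \<Rightarrow> real"
  have "(\<Sum>i\<in>UNIV. \<Sum>j\<in>UNIV. x i * (if i = j then 1 else 0) * x j) = (\<Sum>i\<in>UNIV. x i * x i)"
  proof (rule sum.cong[OF refl])
    fix i
    have "(\<Sum>j\<in>UNIV. x i * (if i = j then 1 else 0) * x j) = (\<Sum>j\<in>UNIV. if i = j then x i * x j else 0)"
      by (rule sum.cong) auto
    then show "(\<Sum>j\<in>UNIV. x i * (if i = j then 1 else 0) * x j) = x i * x i" by simp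
  qed
  also have "\<dots> \<ge> 0" by (intro sum_nonneg) simp
  finally show "0 \<le> (\<Sum>i\<in>UNIV. \<Sum>j\<in>UNIV. x i * (if i = j then 1 else (0::real)) * x j)" .
next
  fix a b assume "E a b" then show "(if a = b then 1 else (0::real)) = 0"
    using assms unfolding simple_graph_def by auto
qed auto

lemma theta_of_feasible:
  assumes "sdp_feasible E M" "(\<Sum>a\<in>UNIV. (J a)^2) = 1"
  shows "psd (\<lambda>a b. M a b * J a * J b) \<and> (\<Sum>a\<in>UNIV. M a a * J a * J a) = 1
    \<and> (\<forall>a b. E a b \<longrightarrow> M a b * J a * J b = 0)"
proof (intro conjI)
  have p: "psd M" and d: "\<And>a. M a a = 1" and z: "\<And>a b. E a b \<Longrightarrow> M a b = 0"
    using assms(1) unfolding sdp_feasible_def by auto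
  show "psd (\<lambda>a b. M a b * J a * J b)" unfolding psd_def
  proof (intro conjI allI)
    fix i j
    have "M i j = M j i" using p unfolding psd_def by blast
    then show "M i j * J i * J j = M j i * J j * J i" by (simp add: mult_ac)
  next
    fix x :: "'a \<Rightarrow> real"
    have "0 \<le> qf M (\<lambda>i. x i * J i) (\<lambda>i. x i * J i)" by (rule psd_qf[OF p])
    also have "qf M (\<lambda>i. x i * J i) (\<lambda>i. x i * J i) = (\<Sum>i\<in>UNIV. \<Sum>j\<in>UNIV. x i * (M i j * J i * J j) * x j)"
      unfolding qf_def by (simp add: mult_ac)
    finally show "0 \<le> (\<Sum>i\<in>UNIV. \<Sum>j\<in>UNIV. x i * (M i j * J i * J j) * x j)" .
  qed
  show "(\<Sum>a\<in>UNIV. M a a * J a * J a) = 1" using assms(2) by (simp add: d power2_eq_square)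
  show "\<forall>a b. E a b \<longrightarrow> M a b * J a * J b = 0" using z by simp
qed

theorem mainTheorem1:
  fixes E :: "'a::finite \<Rightarrow> 'a \<Rightarrow> bool"
  assumes "simple_graph E"
    and "vertex_transitive E"
  shows "worst_H E = - sqrt (worst_H2 E)
    \<and> worst_H2 E = lovasz_theta E
    \<and> sdp_H2 E (\<lambda>_. 1 / sqrt (real CARD('a))) = worst_H2 E
    \<and> sdp_H E (\<lambda>_. 1 / sqrt (real CARD('a))) = worst_H E"
proof -
  define n where "n = real CARD('a)"
  have npos: "n > 0" using n_def by simp
  define u :: "'a \<Rightarrow> real" where "u = (\<lambda>_. 1 / sqrt n)"
  define I :: "'a \<Rightarrow> 'a \<Rightarrow> real" where "I = (\<lambda>a b. if a = b then 1 else 0)"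
  have Ifeas: "sdp_feasible E I" unfolding I_def by (rule id_feasible[OF assms(1)])
  have uu: "u a * u b = 1 / n" for a b using npos by (simp add: u_def real_sqrt_mult[symmetric])
  have u_unit: "(\<Sum>a\<in>UNIV. (u a)^2) = 1" using uu npos n_def by (simp add: power2_eq_square)
  have u_in: "u \<in> unit_vecs" using u_unit unfolding unit_vecs_def by simp
  define val :: "('a \<Rightarrow> 'a \<Rightarrow> real) \<Rightarrow> ('a \<Rightarrow> real) \<Rightarrow> real" where "val = (\<lambda>M J. (\<Sum>a\<in>UNIV. \<Sum>b\<in>UNIV. M a b * J a * J b :: real))"
  define Su where "Su = {val M u | M. sdp_feasible E M}"
  have H2u: "sdp_H2 E u = Sup Su" unfolding sdp_H2_def Su_def val_def by simp
  define K where "K = (\<Sum>a\<in>UNIV. \<Sum>b\<in>(UNIV::'a set). u a * u b)"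
  have Su_bdd: "bdd_above Su" unfolding bdd_above_def
  proof (intro exI[of _ K] ballI)
    fix y assume "y \<in> Su"
    then obtain M where M: "sdp_feasible E M" "y = val M u" unfolding Su_def by blast
    have "M a b * u a * u b \<le> u a * u b" for a b
    proof -
      have "M a b \<le> 1" using feasible_bound[OF M(1), of a b] by simp
      moreover have "u a * u b \<ge> 0" using uu npos by simp
      ultimately show ?thesis using mult_right_mono[of "M a b" 1 "u a * u b"] by (simp add: mult.assoc)
    qed
    then show "y \<le> K" unfolding M(2) val_def K_def by (intro sum_mono) auto
  qed
  have Su_ne: "Su \<noteq> {}" using Ifeas Su_def by blast
  define Th where "Th = {(\<Sum>a\<in>UNIV. \<Sum>b\<in>UNIV. B a b) | B :: 'a \<Rightarrow> 'a \<Rightarrow> real.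
      psd B \<and> (\<Sum>a\<in>UNIV. B a a) = 1 \<and> (\<forall>a b. E a b \<longrightarrow> B a b = 0)}"
  have Th_intro: "(\<Sum>a\<in>UNIV. \<Sum>b\<in>UNIV. B a b) \<in> Th"
    if "psd B \<and> (\<Sum>a\<in>UNIV. B a a) = 1 \<and> (\<forall>a b. E a b \<longrightarrow> B a b = 0)" for B
    unfolding Th_def using that by blast
  have theta_def': "lovasz_theta E = Sup Th" unfolding lovasz_theta_def Th_def by simp
  have Th_le: "t \<le> sdp_H2 E u" if "t \<in> Th" for t
  proof -
    obtain B where B: "psd B" "(\<Sum>a\<in>UNIV. B a a) = 1" "\<forall>a b. E a b \<longrightarrow> B a b = 0"
      "t = (\<Sum>a\<in>UNIV. \<Sum>b\<in>UNIV. B a b)" using \<open>t \<in> Th\<close> unfolding Th_def by blast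
    obtain M where M: "sdp_feasible E M" "t = (\<Sum>a\<in>UNIV. \<Sum>b\<in>UNIV. M a b) / real CARD('a)"
      using averaging[OF assms(2) B(1-3)] B(4) by blast
    have "t = val M u" unfolding M(2) val_def mult.assoc uu using n_def
      by (simp add: sum_divide_distrib)
    then have "t \<in> Su" using M(1) Su_def by blast
    then show ?thesis unfolding H2u using Su_bdd by (rule cSup_upper)
  qed
  have Su_Th: "Su \<subseteq> Th"
  proof
    fix t assume "t \<in> Su"
    then obtain M where M: "sdp_feasible E M" "t = val M u" unfolding Su_def by blast
    note T = theta_of_feasible[OF M(1) u_unit]
    have "t = (\<Sum>a\<in>UNIV. \<Sum>b\<in>UNIV. (\<lambda>a b. M a b * u a * u b) a b)" using M(2) val_def by simp
    then show "t \<in> Th" using Th_intro[OF T] by simp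
  qed
  have Th_bdd: "bdd_above Th" using Th_le unfolding bdd_above_def by blast
  have theta_eq: "lovasz_theta E = sdp_H2 E u"
  proof (rule antisym)
    show "lovasz_theta E \<le> sdp_H2 E u" unfolding theta_def'
      using Su_ne Su_Th by (intro cSup_least Th_le) auto
    show "sdp_H2 E u \<le> lovasz_theta E" unfolding theta_def' H2u
      by (rule cSup_subset_mono[OF Su_ne Th_bdd Su_Th])
  qed
  have H2_le: "sdp_H2 E J \<le> sdp_H2 E u" if "J \<in> unit_vecs" for J
  proof -
    have Jn: "(\<Sum>a\<in>UNIV. (J a)^2) = 1" using that unfolding unit_vecs_def by simp
    show ?thesis unfolding sdp_H2_def
    proof (rule cSup_least)
      show "{\<Sum>a\<in>UNIV. \<Sum>b\<in>UNIV. M a b * J a * J b |M. sdp_feasible E M} \<noteq> {}" using Ifeas by blast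
      fix t assume "t \<in> {\<Sum>a\<in>UNIV. \<Sum>b\<in>UNIV. M a b * J a * J b |M. sdp_feasible E M}"
      then obtain M where M: "sdp_feasible E M" "t = (\<Sum>a\<in>UNIV. \<Sum>b\<in>UNIV. M a b * J a * J b)" by blast
      have "t \<in> Th" using Th_intro[OF theta_of_feasible[OF M(1) Jn]] M(2) by simp
      then show "t \<le> Sup {\<Sum>a\<in>UNIV. \<Sum>b\<in>UNIV. M a b * u a * u b |M. sdp_feasible E M}"
        using Th_le H2u unfolding Su_def val_def by simp
    qed
  qed
  have W_eq: "worst_H2 E = sdp_H2 E u"
    unfolding worst_H2_def by (rule cSup_eq_maximum) (use u_in H2_le in auto)
  have W_nonneg: "0 \<le> sdp_H2 E u"
  proof -
    have "val I u \<in> Su" using Ifeas Su_def by blast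
    then have "val I u \<le> sdp_H2 E u" unfolding H2u using Su_bdd by (rule cSup_upper)
    moreover have "val I u = qf I u u" unfolding val_def qf_def by (simp add: mult_ac)
    moreover have "0 \<le> qf I u u" using Ifeas sdp_feasible_def psd_qf by blast
    ultimately show ?thesis by simp
  qed
  define Hs where "Hs = (\<lambda>J. {(\<Sum>a\<in>UNIV. J a * v a) | (v :: 'a \<Rightarrow> real) M. sdp_feasible E M \<and> psd (block_matrix v M)})"
  have sdpH: "sdp_H E J = Inf (Hs J)" for J unfolding sdp_H_def Hs_def by simp
  have pI: "psd I" using Ifeas unfolding sdp_feasible_def by blast
  have blockI: "psd (block_matrix (\<lambda>_. 0) I)"
    by (rule block_psd[OF pI]) (simp add: psd_qf[OF pI])
  have Su_nn: "0 \<le> t" if tS: "t \<in> Su" for t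
  proof -
    obtain M where M: "sdp_feasible E M" "t = val M u" using tS unfolding Su_def by blast
    have pM: "psd M" using M(1) unfolding sdp_feasible_def by blast
    have "t = qf M u u" unfolding M(2) val_def qf_def by (simp add: mult_ac)
    then show ?thesis using psd_qf[OF pM] by simp
  qed
  have Hs_ne: "Hs J \<noteq> {}" for J unfolding Hs_def using Ifeas blockI by blast
  have Hs_lb: "- sqrt (sdp_H2 E u) \<le> t" if JU: "J \<in> unit_vecs" and tH: "t \<in> Hs J" for J t
  proof -
    obtain v M where vM: "sdp_feasible E M" "psd (block_matrix v M)" "t = (\<Sum>a\<in>UNIV. J a * v a)"
      using tH unfolding Hs_def by blast
    have Jn: "(\<Sum>a\<in>UNIV. (J a)^2) = 1" using JU unfolding unit_vecs_def by simp
    have "t^2 \<le> qf M J J" unfolding vM(3) by (rule block_psd_D[OF vM(2)])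
    also have "qf M J J = val M J" unfolding val_def qf_def by (simp add: mult_ac)
    also have "val M J \<in> Th" unfolding val_def using Th_intro[OF theta_of_feasible[OF vM(1) Jn]] by simp
    then have "val M J \<le> sdp_H2 E u" by (rule Th_le)
    finally have "(-t)^2 \<le> sdp_H2 E u" by simp
    then have "-t \<le> sqrt (sdp_H2 E u)" by (rule real_le_rsqrt)
    then show ?thesis by simp
  qed
  have Hs_bdd: "bdd_below (Hs J)" if "J \<in> unit_vecs" for J
    unfolding bdd_below_def using Hs_lb[OF that] by blast
  have H_ge: "- sqrt (sdp_H2 E u) \<le> sdp_H E J" if "J \<in> unit_vecs" for J
    unfolding sdpH by (rule cInf_greatest[OF Hs_ne]) (rule Hs_lb[OF that])
  have H_le_t: "sdp_H E u \<le> - sqrt t" if tS: "t \<in> Su" for t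
  proof -
    obtain M where M: "sdp_feasible E M" "t = val M u" using tS unfolding Su_def by blast
    have pM: "psd M" using M(1) sdp_feasible_def by blast
    have tq: "t = qf M u u" unfolding M(2) val_def qf_def by (simp add: mult_ac)
    have t0: "0 \<le> t" unfolding tq by (rule psd_qf[OF pM])
    define v where "v = (\<lambda>a. - (\<Sum>b\<in>UNIV. M a b * u b) / sqrt t)"
    have xv: "(\<Sum>a\<in>UNIV. x a * v a) = - qf M x u / sqrt t" for x
      unfolding v_def qf_def by (simp add: sum_distrib_left sum_divide_distrib sum_negf mult_ac)
    have bp: "psd (block_matrix v M)"
    proof (rule block_psd[OF pM])
      fix x
      show "(\<Sum>a\<in>UNIV. x a * v a)^2 \<le> qf M x x"
      proof (cases "t = 0")
        case True then show ?thesis using xv psd_qf[OF pM] by simp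
      next
        case False
        then have tp: "t > 0" using t0 by simp
        have "(\<Sum>a\<in>UNIV. x a * v a)^2 = (qf M x u)^2 / t"
          using tp by (simp add: xv power_divide)
        also have "\<dots> \<le> qf M x x * t / t"
          using psd_CS[OF pM, of x u] tq tp by (intro divide_right_mono) auto
        also have "\<dots> = qf M x x" using tp by simp
        finally show ?thesis .
      qed
    qed
    have "(\<Sum>a\<in>UNIV. u a * v a) = - sqrt t"
    proof -
      have "(\<Sum>a\<in>UNIV. u a * v a) = - t / sqrt t" using xv[of u] tq by simp
      also have "\<dots> = - sqrt t"
      proof (cases "t = 0")
        case False then have "t > 0" using t0 by simp
        then show ?thesis by (simp add: real_div_sqrt)
      qed simp
      finally show ?thesis .
    qed
    then have "- sqrt t \<in> Hs u" unfolding Hs_def using M(1) bp by (intro CollectI exI[of _ v] exI[of _ M]) simp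
    then show ?thesis unfolding sdpH by (rule cInf_lower[OF _ Hs_bdd[OF u_in]])
  qed
  have H_u: "sdp_H E u = - sqrt (sdp_H2 E u)"
  proof (rule antisym)
    show "- sqrt (sdp_H2 E u) \<le> sdp_H E u" by (rule H_ge[OF u_in])
    define s where "s = sdp_H E u"
    obtain t1 where "t1 \<in> Su" using Su_ne by blast
    then have s0: "s \<le> 0" using H_le_t[of t1] s_def Su_nn[of t1] by (smt (verit) real_sqrt_ge_zero)
    have "t \<le> s^2" if "t \<in> Su" for t
    proof -
      have t0: "0 \<le> t" using that by (rule Su_nn)
      have "sqrt t \<le> - s" using H_le_t[OF that] s_def by simp
      then have "(sqrt t)^2 \<le> (-s)^2" using t0 by (intro power_mono) auto
      then show ?thesis using t0 by simp
    qed
    then have "sdp_H2 E u \<le> s^2" unfolding H2u by (intro cSup_least[OF Su_ne]) auto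
    then have "sqrt (sdp_H2 E u) \<le> sqrt (s^2)" by (rule real_sqrt_le_mono)
    then show "sdp_H E u \<le> - sqrt (sdp_H2 E u)" using s0 s_def by simp
  qed
  have WH: "worst_H E = sdp_H E u"
    unfolding worst_H_def
  proof (rule cInf_eq_minimum)
    show "sdp_H E u \<in> sdp_H E ` unit_vecs" using u_in by (rule imageI)
    fix x assume "x \<in> sdp_H E ` unit_vecs"
    then obtain J where "J \<in> unit_vecs" "x = sdp_H E J" by blast
    then show "sdp_H E u \<le> x" unfolding H_u using H_ge by simp
  qed
  show ?thesis using WH H_u W_eq theta_eq u_def n_def by simp
qed

end
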